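(* Let $\bm{H}\in\mathbb{R}^{n\times n}$ be symmetric positive definite, and let $$\mathbf{M}=\begin{bmatrix}(1+\beta)(\mathbf{I}_n-\eta\bm{H}) & \beta(-\mathbf{I}_n+\eta\bm{H})\\ \mathbf{I}_n & \mathbf{0}_n\end{bmatrix}\in\mathbb{R}^{2n\times 2n}.$$ Suppose $0<\eta\le 1/\lambda_{\max}(\bm{H})$ and $1>\beta\ge\frac{1-\sqrt{\eta\lambda_{\min}(\bm{H})}}{1+\sqrt{\eta\lambda_{\min}(\bm{H})}}$, and let $\mathbf{v}_t=\mathbf{M}\mathbf{v}_{t-1}$ for $t\le T$. Then for every $k\le T$, $$\|\mathbf{v}_k\|\le C\Big(\sqrt{\beta(1-\eta\lambda_{\min}(\bm{H}))}\Big)^k\|\mathbf{v}_0\|,\qquad C=\frac{2\beta(1-\eta\lambda_{\min}(\bm{H}))+2}{\sqrt{\min\{g(\beta,\eta\lambda_{\min}(\bm{H})),\,g(\beta,\eta\lambda_{\max}(\bm{H}))\}}},$$ where $g(x,y)=4x(1-y)-[(1+x)(1-y)]^2$.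
   Context: $\lambda_{\min}(\cdot)$, $\lambda_{\max}(\cdot)$ denote smallest and largest eigenvalues; $\|\cdot\|$ is the Euclidean norm; $\mathbf{I}_n$, $\mathbf{0}_n$ are the $n\times n$ identity and zero matrices. *)

theory Defs
  imports "HOL-Analysis.Analysis"
begin

definition is_eigenvalue :: "real^'n^'n \<Rightarrow> real \<Rightarrow> bool" where
  "is_eigenvalue A c \<longleftrightarrow> (\<exists>x. x \<noteq> 0 \<and> A *v x = c *\<^sub>R x)"

definition lambda_min :: "real^'n^'n \<Rightarrow> real" where
  "lambda_min A = Min {c. is_eigenvalue A c}"

definition lambda_max :: "real^'n^'n \<Rightarrow> real" where
  "lambda_max A = Max {c. is_eigenvalue A c}"

definition symmetric_pd :: "real^'n^'n \<Rightarrow> bool" where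
  "symmetric_pd H \<longleftrightarrow> transpose H = H \<and> (\<forall>x. x \<noteq> 0 \<longrightarrow> x \<bullet> (H *v x) > 0)"

text \<open>The 2n x 2n block matrix M, with block index type 'n + 'n
  (Inl = first block, Inr = second block).\<close>
definition blockM :: "real \<Rightarrow> real \<Rightarrow> real^'n^'n \<Rightarrow> real^('n + 'n)^('n + 'n)" where
  "blockM \<beta> \<eta> H = (\<chi> i j. case (i, j) of
      (Inl a, Inl b) \<Rightarrow> (1 + \<beta>) * ((mat 1 :: real^'n^'n) $ a $ b - \<eta> * H $ a $ b)
    | (Inl a, Inr b) \<Rightarrow> \<beta> * (- (mat 1 :: real^'n^'n) $ a $ b + \<eta> * H $ a $ b)
    | (Inr a, Inl b) \<Rightarrow> (mat 1 :: real^'n^'n) $ a $ b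
    | (Inr a, Inr b) \<Rightarrow> 0)"

definition gfun :: "real \<Rightarrow> real \<Rightarrow> real" where
  "gfun x y = 4 * x * (1 - y) - ((1 + x) * (1 - y))^2"

end

theory Submission
  imports Defs
begin

lemma sym_dot:
  fixes H :: "real^'n^'n"
  assumes "transpose H = H"
  shows "(H *v x) \<bullet> y = x \<bullet> (H *v y)"
proof -
  have s: "H $ i $ j = H $ j $ i" for i j
    using assms by (metis transpose_def vec_lambda_beta)
  have "(H *v x) \<bullet> y = (\<Sum>i\<in>UNIV. \<Sum>j\<in>UNIV. H$i$j * x$j * y$i)"
    by (simp add: inner_vec_def matrix_vector_mult_def sum_distrib_right)
  also have "\<dots> = (\<Sum>j\<in>UNIV. \<Sum>i\<in>UNIV. H$i$j * x$j * y$i)"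
    by (rule sum.swap)
  also have "\<dots> = x \<bullet> (H *v y)"
    by (simp add: inner_vec_def matrix_vector_mult_def sum_distrib_left s mult_ac)
  finally show ?thesis .
qed

lemma quad_zero:
  fixes b c :: real
  assumes "\<And>t. 0 \<le> 2*b*t + c*t^2"
  shows "b = 0"
proof (rule ccontr)
  assume nz: "b \<noteq> 0"
  define d where "d = \<bar>c\<bar> + 1"
  have pos: "d > 0" "c - 2*d < 0" unfolding d_def by (simp_all add: abs_if)
  define t where "t = - b / d"
  have "2*b*t + c*t^2 = b^2 / d^2 * (c - 2*d)"
    unfolding t_def using pos by (simp add: field_simps power2_eq_square)
  also have "\<dots> < 0"
    using nz pos by (intro mult_pos_neg) auto
  finally show False using assms[of t] by linarith
qed

lemma eig_in_subspace:
  fixes H :: "real^'n^'n"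
  assumes sym: "transpose H = H" and S: "subspace S" and inv: "\<And>x. x \<in> S \<Longrightarrow> H *v x \<in> S"
    and nz: "S \<noteq> {0}"
  obtains x where "x \<in> S" "norm x = 1" "H *v x = (x \<bullet> (H *v x)) *\<^sub>R x"
proof -
  let ?K = "S \<inter> sphere 0 1"
  have cK: "compact ?K"
    using closed_subspace[OF S] compact_sphere by (simp add: closed_Int_compact)
  obtain z where z: "z \<in> S" "z \<noteq> 0" using nz subspace_0[OF S] by blast
  have "z /\<^sub>R norm z \<in> ?K" using z S by (simp add: subspace_scale norm_divide)
  hence ne: "?K \<noteq> {}" by blast
  have cont: "continuous_on ?K (\<lambda>x. x \<bullet> (H *v x))"
    by (intro continuous_intros continuous_on_id linear_continuous_on matrix_vector_mul_linear
          bounded_linear_intros) 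
  obtain x where x: "x \<in> ?K" and mx: "\<And>y. y \<in> ?K \<Longrightarrow> y \<bullet> (H *v y) \<le> x \<bullet> (H *v x)"
    using continuous_attains_sup[OF cK ne cont] by blast
  define \<mu> where "\<mu> = x \<bullet> (H *v x)"
  have xS: "x \<in> S" and nx: "norm x = 1" using x by auto
  have hom: "w \<bullet> (H *v w) \<le> \<mu> * (w \<bullet> w)" if w: "w \<in> S" for w
  proof (cases "w = 0")
    case True then show ?thesis by simp
  next
    case False
    let ?u = "w /\<^sub>R norm w"
    have "?u \<in> ?K" using w False S by (simp add: subspace_scale norm_divide)
    hence "?u \<bullet> (H *v ?u) \<le> \<mu>" using mx \<mu>_def by blast
    hence "(w \<bullet> (H *v w)) / (norm w)^2 \<le> \<mu>"
      by (simp add: matrix_vector_mult_scaleR power2_eq_square divide_simps)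
    hence "w \<bullet> (H *v w) \<le> \<mu> * (norm w)^2" using False by (simp add: divide_simps)
    then show ?thesis by (simp add: power2_norm_eq_inner)
  qed
  have orth: "y \<bullet> (H *v x - \<mu> *\<^sub>R x) = 0" if y: "y \<in> S" for y
  proof -
    have "0 \<le> 2 * (\<mu> * (x \<bullet> y) - y \<bullet> (H *v x)) * t + (\<mu> * (y \<bullet> y) - y \<bullet> (H *v y)) * t^2" for t
    proof -
      have "x + t *\<^sub>R y \<in> S" using xS y S by (simp add: subspace_add subspace_scale)
      from hom[OF this]
      have "(x + t *\<^sub>R y) \<bullet> (H *v (x + t *\<^sub>R y)) \<le> \<mu> * ((x + t *\<^sub>R y) \<bullet> (x + t *\<^sub>R y))" .
      moreover have "x \<bullet> x = 1" using nx by (simp add: norm_eq_1)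
      moreover have "x \<bullet> (H *v y) = y \<bullet> (H *v x)" using sym_dot[OF sym, of y x] by (simp add: inner_commute)
      ultimately show ?thesis
        by (simp add: matrix_vector_right_distrib matrix_vector_mult_scaleR inner_add_left inner_add_right
            \<mu>_def algebra_simps power2_eq_square inner_commute)
    qed
    hence "\<mu> * (x \<bullet> y) - y \<bullet> (H *v x) = 0" by (rule quad_zero)
    thus ?thesis by (simp add: inner_diff_right algebra_simps inner_commute)
  qed
  have "H *v x - \<mu> *\<^sub>R x \<in> S" using inv[OF xS] xS S by (simp add: subspace_diff subspace_scale)
  from orth[OF this] have "H *v x - \<mu> *\<^sub>R x = 0" by simp
  hence "H *v x = \<mu> *\<^sub>R x" by simp
  thus ?thesis using that xS nx \<mu>_def by blast
qed
lemma spectral_subspace: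
  fixes H :: "real^'n^'n"
  assumes sym: "transpose H = H"
  shows "subspace S \<Longrightarrow> (\<And>x. x \<in> S \<Longrightarrow> H *v x \<in> S) \<Longrightarrow>
    \<exists>B. B \<subseteq> S \<and> span B = S \<and> pairwise orthogonal B \<and>
        (\<forall>u\<in>B. norm u = 1 \<and> H *v u = (u \<bullet> (H *v u)) *\<^sub>R u)"
proof (induction "dim S" arbitrary: S rule: less_induct)
  case less
  show ?case
  proof (cases "S = {0}")
    case True then show ?thesis by (intro exI[of _ "{}"]) auto
  next
    case False
    obtain x where xS: "x \<in> S" and nx: "norm x = 1" and ex: "H *v x = (x \<bullet> (H *v x)) *\<^sub>R x"
      using eig_in_subspace[OF sym less.prems(1) less.prems(2) False] by blast
    define S' where "S' = {w \<in> S. x \<bullet> w = 0}"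
    have sub': "subspace S'" using less.prems(1)
      by (auto simp: subspace_def S'_def inner_add_right)
    have inv': "H *v w \<in> S'" if "w \<in> S'" for w
    proof -
      have "x \<bullet> (H *v w) = (H *v x) \<bullet> w" using sym_dot[OF sym] by simp
      also have "\<dots> = (x \<bullet> (H *v x)) * (x \<bullet> w)" by (metis ex inner_scaleR_left)
      also have "\<dots> = 0" using that by (simp add: S'_def)
      finally show ?thesis using that less.prems(2) by (simp add: S'_def)
    qed
    have xx: "x \<bullet> x = 1" using nx by (simp add: norm_eq_1)
    have "x \<notin> S'" using xx by (simp add: S'_def)
    moreover have "S' \<subseteq> S" by (auto simp: S'_def)
    ultimately have "S' \<subset> S" using xS by blast
    moreover have "span S' = S'" "span S = S" using sub' less.prems(1) by (simp_all add: span_eq_iff)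
    ultimately have "span S' \<subset> span S" by metis
    hence "dim S' < dim S" by (rule dim_psubset)
    then obtain B' where B': "B' \<subseteq> S'" "span B' = S'" "pairwise orthogonal B'"
        "\<forall>u\<in>B'. norm u = 1 \<and> H *v u = (u \<bullet> (H *v u)) *\<^sub>R u"
      using less.hyps[OF _ sub' inv'] by blast
    have sub: "insert x B' \<subseteq> S" using B'(1) xS by (auto simp: S'_def)
    have "span (insert x B') = S"
    proof
      show "span (insert x B') \<subseteq> S" using sub less.prems(1) by (simp add: span_minimal)
      show "S \<subseteq> span (insert x B')"
      proof
        fix w assume w: "w \<in> S"
        have "w - (x \<bullet> w) *\<^sub>R x \<in> S'" using w xS xx less.prems(1)
          by (simp add: S'_def subspace_diff subspace_scale inner_diff_right)
        hence "w - (x \<bullet> w) *\<^sub>R x \<in> span (insert x B')" using B'(2)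
          by (metis span_mono subset_insertI subsetD)
        moreover have "(x \<bullet> w) *\<^sub>R x \<in> span (insert x B')" by (simp add: span_base span_mul)
        ultimately have "(w - (x \<bullet> w) *\<^sub>R x) + (x \<bullet> w) *\<^sub>R x \<in> span (insert x B')"
          by (rule span_add)
        thus "w \<in> span (insert x B')" by simp
      qed
    qed
    moreover have "pairwise orthogonal (insert x B')"
      using B'(1,3) by (auto simp: pairwise_insert orthogonal_def S'_def inner_commute)
    ultimately show ?thesis using sub B'(4) xS nx ex by (intro exI[of _ "insert x B'"]) auto
  qed
qed

lemma spectral:
  fixes H :: "real^'n^'n"
  assumes sym: "transpose H = H"
  obtains B where "span B = UNIV" "pairwise orthogonal B"
     "\<And>u. u \<in> B \<Longrightarrow> norm u = 1" "\<And>u. u \<in> B \<Longrightarrow> H *v u = (u \<bullet> (H *v u)) *\<^sub>R u"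
  using spectral_subspace[OF sym, of UNIV] by auto


lemma two_d:
  fixes p q :: "nat \<Rightarrow> real" and \<tau> \<delta> :: real
  assumes d: "0 < \<delta>" and g: "0 < 4*\<delta> - \<tau>^2"
    and r: "\<And>k. k < T \<Longrightarrow> p (Suc k) = \<tau> * p k - \<delta> * q k \<and> q (Suc k) = p k"
    and k: "k \<le> T"
  shows "(p k)^2 + (q k)^2 \<le> 4*(1+\<delta>)^2/(4*\<delta>-\<tau>^2) * \<delta>^k * ((p 0)^2 + (q 0)^2)"
proof -
  define Q where "Q k = (p k)^2 - \<tau> * p k * q k + \<delta> * (q k)^2" for k
  have inv: "Q k = \<delta>^k * Q 0" if "k \<le> T" for k
    using that
  proof (induction k)
    case 0 then show ?case by simp
  next
    case (Suc k)
    hence "k < T" by simp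
    from r[OF this] have e: "p (Suc k) = \<tau> * p k - \<delta> * q k" "q (Suc k) = p k" by auto
    have "Q (Suc k) = \<delta> * Q k"
      unfolding Q_def e by (simp add: algebra_simps power2_eq_square)
    then show ?case using Suc by simp
  qed
  let ?g = "4*\<delta> - \<tau>^2"
  have up: "Q j \<le> (1+\<delta>) * ((p j)^2 + (q j)^2)" for j
  proof -
    have "0 \<le> (\<tau> * p j + 2 * q j)^2 / 4 + (\<delta> - \<tau>^2/4) * (p j)^2"
      using g by (intro add_nonneg_nonneg mult_nonneg_nonneg) auto
    moreover have "(1+\<delta>) * ((p j)^2 + (q j)^2) - Q j = (\<tau> * p j + 2 * q j)^2 / 4 + (\<delta> - \<tau>^2/4) * (p j)^2"
      unfolding Q_def by (simp add: field_simps power2_eq_square)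
    ultimately show ?thesis by linarith
  qed
  have lo: "?g * ((p j)^2 + (q j)^2) \<le> 4 * (1+\<delta>) * Q j" for j
  proof -
    have "4 * (1+\<delta>) * Q j - ?g * ((p j)^2 + (q j)^2)
        = (4+\<tau>^2) * (p j)^2 - 4*(1+\<delta>)*\<tau> * p j * q j + (4*\<delta>^2+\<tau>^2) * (q j)^2"
      unfolding Q_def by (simp add: algebra_simps power2_eq_square)
    also have "\<dots> \<ge> 0"
    proof -
      let ?X = "(4+\<tau>^2) * (p j)^2 - 4*(1+\<delta>)*\<tau> * p j * q j + (4*\<delta>^2+\<tau>^2) * (q j)^2"
      have c: "4+\<tau>^2 > 0" by (simp add: add_pos_nonneg)
      have "(4+\<tau>^2) * ?X = ((4+\<tau>^2) * p j - 2*(1+\<delta>)*\<tau> * q j)^2 + ?g^2 * (q j)^2"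
        by (simp add: algebra_simps power2_eq_square)
      also have "\<dots> \<ge> 0" by simp
      finally show ?thesis using c by (simp add: zero_le_mult_iff)
    qed
    finally show ?thesis by simp
  qed
  have "?g * ((p k)^2 + (q k)^2) \<le> 4 * (1+\<delta>) * (\<delta>^k * Q 0)" using lo[of k] inv[OF k] by simp
  also have "\<dots> \<le> 4 * (1+\<delta>) * (\<delta>^k * ((1+\<delta>) * ((p 0)^2 + (q 0)^2)))"
    using up[of 0] d by (intro mult_left_mono) auto
  finally have "?g * ((p k)^2 + (q k)^2) \<le> 4*(1+\<delta>)^2 * \<delta>^k * ((p 0)^2 + (q 0)^2)"
    by (simp add: power2_eq_square mult_ac)
  thus ?thesis using g by (simp add: field_simps)
qed

definition Xb :: "real^('n+'n) \<Rightarrow> real^'n" where "Xb v = (\<chi> a. v $ Inl a)"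
definition Yb :: "real^('n+'n) \<Rightarrow> real^'n" where "Yb v = (\<chi> a. v $ Inr a)"

lemma sum_UNIV_Plus:
  fixes f :: "('a::finite + 'b::finite) \<Rightarrow> 'c::comm_monoid_add"
  shows "sum f UNIV = (\<Sum>a\<in>UNIV. f (Inl a)) + (\<Sum>b\<in>UNIV. f (Inr b))"
proof -
  have "sum f UNIV = sum f (UNIV <+> UNIV)" by simp
  also have "\<dots> = (\<Sum>a\<in>UNIV. f (Inl a)) + (\<Sum>b\<in>UNIV. f (Inr b))"
    by (subst sum.Plus) (simp_all add: o_def)
  finally show ?thesis .
qed

lemma norm_split: "(norm v)^2 = (norm (Xb v))^2 + (norm (Yb v))^2"
proof -
  have "(norm v)^2 = (\<Sum>a\<in>UNIV. v$Inl a * v$Inl a) + (\<Sum>a\<in>UNIV. v$Inr a * v$Inr a)"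
    by (simp add: power2_norm_eq_inner inner_vec_def sum_UNIV_Plus)
  then show ?thesis by (simp add: power2_norm_eq_inner inner_vec_def Xb_def Yb_def)
qed

lemma mat1_sum: "(\<Sum>b\<in>UNIV. (mat 1 :: real^'n^'n) $ a $ b * f b) = f a"
  by (simp add: mat_def mult_if_delta)

lemma M_X: "Xb (blockM \<beta> \<eta> (H::real^'n^'n) *v v) = (1+\<beta>) *\<^sub>R (Xb v - \<eta> *\<^sub>R (H *v Xb v)) - \<beta> *\<^sub>R (Yb v - \<eta> *\<^sub>R (H *v Yb v))"
proof -
  let ?m = "mat 1 :: real^'n^'n"
  have "(blockM \<beta> \<eta> H *v v) $ Inl a = (\<Sum>b\<in>UNIV. ((1+\<beta>) * (?m$a$b - \<eta> * H$a$b)) * v$Inl b)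
       + (\<Sum>b\<in>UNIV. (\<beta> * (- ?m$a$b + \<eta> * H$a$b)) * v$Inr b)" for a
    by (simp add: matrix_vector_mult_def sum_UNIV_Plus blockM_def)
  also have "\<dots> a = (1+\<beta>) * ((\<Sum>b\<in>UNIV. ?m$a$b * v$Inl b) - \<eta> * (\<Sum>b\<in>UNIV. H$a$b * v$Inl b))
      + \<beta> * (- (\<Sum>b\<in>UNIV. ?m$a$b * v$Inr b) + \<eta> * (\<Sum>b\<in>UNIV. H$a$b * v$Inr b))" for a
    by (simp add: algebra_simps sum.distrib sum_subtractf sum_distrib_left sum_negf)
  also have "\<dots> a = (1+\<beta>) * (v$Inl a - \<eta> * (\<Sum>b\<in>UNIV. H$a$b * v$Inl b))
      + \<beta> * (- v$Inr a + \<eta> * (\<Sum>b\<in>UNIV. H$a$b * v$Inr b))" for a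
    by (simp only: mat1_sum)
  finally show ?thesis
    by (simp add: vec_eq_iff Xb_def Yb_def matrix_vector_mult_def algebra_simps)
qed

lemma M_Y: "Yb (blockM \<beta> \<eta> (H::real^'n^'n) *v v) = Xb v"
proof -
  have "(blockM \<beta> \<eta> H *v v) $ Inr a = (\<Sum>b\<in>UNIV. (mat 1 :: real^'n^'n)$a$b * v$Inl b)" for a
    by (simp add: matrix_vector_mult_def sum_UNIV_Plus blockM_def)
  then show ?thesis by (simp add: vec_eq_iff Xb_def Yb_def mat1_sum)
qed

lemma gconc:
  assumes "ylo \<le> y" "y \<le> yhi"
  shows "min (gfun b ylo) (gfun b yhi) \<le> gfun b y"
proof (cases "ylo = yhi")
  case True then show ?thesis using assms by simp
next
  case False
  hence d: "yhi - ylo > 0" using assms by simp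
  let ?m = "min (gfun b ylo) (gfun b yhi)"
  have id: "(yhi-ylo) * gfun b y = (yhi-y) * gfun b ylo + (y-ylo) * gfun b yhi
      + (1+b)^2 * ((yhi-y) * (y-ylo) * (yhi-ylo))"
    by (simp add: gfun_def algebra_simps power2_eq_square)
  have "(yhi-y) * ?m \<le> (yhi-y) * gfun b ylo" using assms by (intro mult_left_mono) auto
  moreover have "(y-ylo) * ?m \<le> (y-ylo) * gfun b yhi" using assms by (intro mult_left_mono) auto
  moreover have "0 \<le> (1+b)^2 * ((yhi-y) * (y-ylo) * (yhi-ylo))" using assms by simp
  ultimately have "(yhi-ylo) * ?m \<le> (yhi-ylo) * gfun b y" using id by (simp add: algebra_simps)
  thus ?thesis using d by simp
qed

theorem lemma2:
  fixes H :: "real^'n^'n" and \<eta> \<beta> :: real and T :: nat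
    and v :: "nat \<Rightarrow> real^('n + 'n)"
  assumes H: "symmetric_pd H"
    and eta_pos: "0 < \<eta>" and eta_le: "\<eta> \<le> 1 / lambda_max H"
    and beta_lt: "\<beta> < 1"
    and beta_ge: "\<beta> \<ge> (1 - sqrt (\<eta> * lambda_min H)) / (1 + sqrt (\<eta> * lambda_min H))"
    and C_finite: "0 < min (gfun \<beta> (\<eta> * lambda_min H)) (gfun \<beta> (\<eta> * lambda_max H))"
    and rec: "\<And>t. 1 \<le> t \<Longrightarrow> t \<le> T \<Longrightarrow> v t = blockM \<beta> \<eta> H *v v (t - 1)"
  shows "\<forall>k \<le> T. norm (v k) \<le>
      ((2 * \<beta> * (1 - \<eta> * lambda_min H) + 2)
         / sqrt (min (gfun \<beta> (\<eta> * lambda_min H)) (gfun \<beta> (\<eta> * lambda_max H))))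
      * (sqrt (\<beta> * (1 - \<eta> * lambda_min H))) ^ k * norm (v 0)"
proof -
  have sym: "transpose H = H" and pd: "\<And>x. x \<noteq> 0 \<Longrightarrow> x \<bullet> (H *v x) > 0"
    using H unfolding symmetric_pd_def by auto
  obtain B where Bspan: "span B = UNIV" and Borth: "pairwise orthogonal B"
    and Bn: "\<And>u. u \<in> B \<Longrightarrow> norm u = 1"
    and Beig: "\<And>u. u \<in> B \<Longrightarrow> H *v u = (u \<bullet> (H *v u)) *\<^sub>R u"
    using spectral[OF sym] by blast
  define mu where "mu u = u \<bullet> (H *v u)" for u
  have Beig': "H *v u = mu u *\<^sub>R u" if "u \<in> B" for u using Beig[OF that] mu_def by simp
  have B0: "0 \<notin> B" using Bn by force
  have finB: "finite B"
    using pairwise_orthogonal_independent[OF Borth B0] by (simp add: independent_imp_finite)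
  have uu: "u \<bullet> u = 1" if "u \<in> B" for u using Bn[OF that] by (simp add: norm_eq_1)
  have uv: "u \<bullet> u' = 0" if "u \<in> B" "u' \<in> B" "u \<noteq> u'" for u u'
    using Borth that by (auto simp: pairwise_def orthogonal_def)
  have pars: "(norm w)^2 = (\<Sum>u\<in>B. (w \<bullet> u)^2)" for w
  proof -
    define p where "p = (\<Sum>u\<in>B. (w \<bullet> u) *\<^sub>R u)"
    have o: "orthogonal (w - p) u'" if "u' \<in> B" for u'
    proof -
      have "p \<bullet> u' = (\<Sum>u\<in>B. (w \<bullet> u) * (u \<bullet> u'))" by (simp add: p_def inner_sum_left)
      also have "\<dots> = (\<Sum>u\<in>B. if u = u' then w \<bullet> u' else 0)"
        by (rule sum.cong) (auto simp: uu uv that)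
      also have "\<dots> = w \<bullet> u'" using that finB by simp
      finally show ?thesis by (simp add: inner_diff_left orthogonal_def)
    qed
    have "orthogonal (w - p) (w - p)"
      by (rule orthogonal_to_span[of _ B]) (use o Bspan in auto)
    hence wp: "w = p" by (simp add: orthogonal_def)
    have "(norm w)^2 = w \<bullet> p" using wp by (simp add: power2_norm_eq_inner)
    also have "\<dots> = (\<Sum>u\<in>B. (w \<bullet> u)^2)"
      by (simp add: p_def inner_sum_right power2_eq_square)
    finally show ?thesis .
  qed
  have isE: "is_eigenvalue H (mu u)" if "u \<in> B" for u
    unfolding is_eigenvalue_def using Beig'[OF that] B0 that by (intro exI[of _ u]) auto
  have Esub: "{c. is_eigenvalue H c} \<subseteq> mu ` B"
  proof
    fix c assume "c \<in> {c. is_eigenvalue H c}"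
    then obtain w where w: "w \<noteq> 0" "H *v w = c *\<^sub>R w" by (auto simp: is_eigenvalue_def)
    have "\<exists>u\<in>B. w \<bullet> u \<noteq> 0"
    proof (rule ccontr)
      assume "\<not> ?thesis"
      hence "(norm w)^2 = 0" using pars[of w] by simp
      thus False using w by simp
    qed
    then obtain u where u: "u \<in> B" "w \<bullet> u \<noteq> 0" by blast
    have "c * (w \<bullet> u) = (H *v w) \<bullet> u" using w by simp
    also have "\<dots> = w \<bullet> (H *v u)" by (rule sym_dot[OF sym])
    also have "\<dots> = mu u * (w \<bullet> u)" using Beig'[OF u(1)] by simp
    finally have "c = mu u" using u by simp
    thus "c \<in> mu ` B" using u by blast
  qed
  have finE: "finite {c. is_eigenvalue H c}" using Esub finB finite_subset by blast
  have lmin: "lambda_min H \<le> mu u" if "u \<in> B" for u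
    unfolding lambda_min_def using finE isE[OF that] by (intro Min_le) auto
  have lmax: "mu u \<le> lambda_max H" if "u \<in> B" for u
    unfolding lambda_max_def using finE isE[OF that] by (intro Max_ge) auto
  have mupos: "mu u > 0" if "u \<in> B" for u using pd[of u] B0 that mu_def by auto
  have Bne: "B \<noteq> {}"
  proof
    assume "B = {}"
    hence "(UNIV :: (real^'n) set) = {0}" using Bspan by simp
    moreover have "(axis undefined 1 :: real^'n) \<noteq> 0" by (simp add: axis_eq_0_iff)
    ultimately show False by blast
  qed
  then obtain u0 where u0: "u0 \<in> B" by blast
  have lmaxpos: "lambda_max H > 0" using lmax[OF u0] mupos[OF u0] by simp
  have eta_lmax: "\<eta> * lambda_max H \<le> 1"
    using eta_le lmaxpos by (simp add: field_simps)
  define m where "m = min (gfun \<beta> (\<eta> * lambda_min H)) (gfun \<beta> (\<eta> * lambda_max H))"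
  define amax where "amax = 1 - \<eta> * lambda_min H"
  define dmax where "dmax = \<beta> * amax"
  define a where "a u = 1 - \<eta> * mu u" for u
  have mpos: "m > 0" using C_finite m_def by simp
  have gu: "gfun \<beta> (\<eta> * mu u) \<ge> m" if "u \<in> B" for u
    unfolding m_def using lmin[OF that] lmax[OF that] eta_pos
    by (intro gconc) (auto intro: mult_left_mono)
  have a_nn: "a u \<ge> 0" if "u \<in> B" for u
  proof -
    have "\<eta> * mu u \<le> \<eta> * lambda_max H" using lmax[OF that] eta_pos by (intro mult_left_mono) auto
    thus ?thesis using eta_lmax a_def by simp
  qed
  have g_eq: "gfun \<beta> (\<eta> * mu u) = 4 * (\<beta> * a u) - ((1+\<beta>) * a u)^2" for u
    by (simp add: gfun_def a_def)
  have a_pos: "a u > 0" and b_pos: "\<beta> > 0" if "u \<in> B" for u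
  proof -
    have g0: "4 * (\<beta> * a u) - ((1+\<beta>) * a u)^2 > 0" using gu[OF that] mpos g_eq[of u] by simp
    show "a u > 0"
    proof (rule ccontr)
      assume "\<not> a u > 0" hence "a u = 0" using a_nn[OF that] by simp
      thus False using g0 by simp
    qed
    have "4 * (\<beta> * a u) > 0" using g0 zero_le_power2[of "(1+\<beta>) * a u"] by linarith
    hence "\<beta> * a u > 0" by simp
    thus "\<beta> > 0" using \<open>a u > 0\<close> by (simp add: zero_less_mult_iff)
  qed
  have bpos: "\<beta> > 0" using b_pos[OF u0] .
  have a_le: "a u \<le> amax" if "u \<in> B" for u
    unfolding a_def amax_def using lmin[OF that] eta_pos by (simp add: mult_left_mono)
  have d_le: "\<beta> * a u \<le> dmax" if "u \<in> B" for u
    unfolding dmax_def using a_le[OF that] bpos by (simp add: mult_left_mono)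
  have dmaxpos: "dmax > 0" using d_le[OF u0] a_pos[OF u0] bpos by (smt (verit) mult_pos_pos)
  define K where "K = 4 * (1 + dmax)^2 / m"
  define p where "p u k = Xb (v k) \<bullet> u" for u k
  define q where "q u k = Yb (v k) \<bullet> u" for u k
  have blk: "(p u k)^2 + (q u k)^2 \<le> K * dmax^k * ((p u 0)^2 + (q u 0)^2)"
    if u: "u \<in> B" and k: "k \<le> T" for u k
  proof -
    let ?\<tau> = "(1+\<beta>) * a u" and ?\<delta> = "\<beta> * a u"
    have r: "p u (Suc j) = ?\<tau> * p u j - ?\<delta> * q u j \<and> q u (Suc j) = p u j" if j: "j < T" for j
    proof -
      have vs: "v (Suc j) = blockM \<beta> \<eta> H *v v j" using rec[of "Suc j"] j by simp
      have hx: "(H *v w) \<bullet> u = mu u * (w \<bullet> u)" for w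
        using sym_dot[OF sym, of w u] Beig'[OF u] by simp
      show ?thesis
        unfolding p_def q_def vs M_X M_Y
        by (simp add: inner_diff_left hx a_def algebra_simps)
    qed
    have dpos: "0 < ?\<delta>" using a_pos[OF u] bpos by simp
    have gpos: "0 < 4 * ?\<delta> - ?\<tau>^2" using gu[OF u] mpos g_eq[of u] by simp
    have "(p u k)^2 + (q u k)^2 \<le> 4*(1+?\<delta>)^2/(4*?\<delta>-?\<tau>^2) * ?\<delta>^k * ((p u 0)^2 + (q u 0)^2)"
      by (rule two_d[where p="p u" and q="q u", OF dpos gpos r k])
    also have "\<dots> \<le> K * dmax^k * ((p u 0)^2 + (q u 0)^2)"
    proof (intro mult_right_mono mult_mono)
      have "(1+?\<delta>)^2 \<le> (1+dmax)^2" using d_le[OF u] dpos by (intro power_mono) auto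
      moreover have "m \<le> 4*?\<delta>-?\<tau>^2" using gu[OF u] g_eq[of u] by simp
      ultimately show "4*(1+?\<delta>)^2/(4*?\<delta>-?\<tau>^2) \<le> K" unfolding K_def using mpos
        by (intro frac_le) auto
      show "?\<delta>^k \<le> dmax^k" using d_le[OF u] dpos by (intro power_mono) auto
      show "0 \<le> K" unfolding K_def using mpos by simp
      show "0 \<le> ?\<delta>^k" using dpos by simp
    qed simp
    finally show ?thesis .
  qed
  have nrm: "(norm (v k))^2 = (\<Sum>u\<in>B. (p u k)^2 + (q u k)^2)" for k
    by (simp add: norm_split pars p_def q_def sum.distrib)
  show ?thesis
  proof (intro allI impI)
    fix k assume k: "k \<le> T"
    define C where "C = (2 * \<beta> * (1 - \<eta> * lambda_min H) + 2) / sqrt m"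
    have C: "C = (2 * dmax + 2) / sqrt m" unfolding C_def dmax_def amax_def by simp
    have "(norm (v k))^2 \<le> (\<Sum>u\<in>B. K * dmax^k * ((p u 0)^2 + (q u 0)^2))"
      unfolding nrm by (rule sum_mono) (rule blk[OF _ k])
    also have "\<dots> = K * dmax^k * (norm (v 0))^2"
      by (simp add: nrm sum_distrib_left)
    also have "\<dots> = (C * sqrt dmax ^ k * norm (v 0))^2"
    proof -
      have s1: "(sqrt dmax ^ k)^2 = dmax^k"
        using dmaxpos by (simp add: real_sqrt_power[symmetric])
      have s2: "C^2 = (2 * dmax + 2)^2 / m"
        unfolding C using mpos by (simp add: power_divide)
      have "(C * sqrt dmax ^ k)^2 = K * dmax^k"
        unfolding power_mult_distrib s1 s2 K_def by (simp add: power2_eq_square algebra_simps)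
      thus ?thesis by (simp add: power_mult_distrib)
    qed
    finally have "(norm (v k))^2 \<le> (C * sqrt dmax ^ k * norm (v 0))^2" .
    moreover have "0 \<le> C * sqrt dmax ^ k * norm (v 0)"
      unfolding C using dmaxpos mpos by simp
    ultimately have "norm (v k) \<le> C * sqrt dmax ^ k * norm (v 0)"
      by (rule power2_le_imp_le)
    thus "norm (v k) \<le> ((2 * \<beta> * (1 - \<eta> * lambda_min H) + 2)
         / sqrt (min (gfun \<beta> (\<eta> * lambda_min H)) (gfun \<beta> (\<eta> * lambda_max H))))
      * (sqrt (\<beta> * (1 - \<eta> * lambda_min H))) ^ k * norm (v 0)"
      unfolding C_def m_def dmax_def amax_def by simp
  qed
qed

end
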